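(* Let $\mathbf{k}$ be a field, $p\ge3$ an integer, $S=\mathbf{k}[e_1,\dots,e_{2p}]$, and let $\mathcal{F}$ be the total complex defined below. Then $H_i(\mathcal{F})=0$ for all $i\neq0$.
   Context: Let $V=\operatorname{span}_{\mathbf{k}}(e_1,\dots,e_{p-1})$ and $W=\operatorname{span}_{\mathbf{k}}(e_{p+1},\dots,e_{2p-1})$ inside $S_1$. For $U\in\{V,W\}$, the Koszul differential $\partial^U:S\otimes_{\mathbf{k}}\bigwedge^kU\to S\otimes_{\mathbf{k}}\bigwedge^{k-1}U$ is $s\otimes u_1\wedge\cdots\wedge u_k\mapsto\sum_{l=1}^k(-1)^lsu_l\otimes u_1\wedge\cdots\widehat{u_l}\cdots\wedge u_k$. For $a,b\ge0$ let $C_{a,b}=S\otimes\bigwedge^{a+2}V\otimes\bigwedge^bW$, with horizontal maps $\partial^h=\partial^V\otimes1:C_{a,b}\to C_{a-1,b}$ (zero for $a=0$) and vertical maps $\partial^v:C_{a,b}\to C_{a,b-1}$, $s\otimes\omega\otimes w_1\wedge\cdots\wedge w_b\mapsto(-1)^a\sum_{l=1}^b(-1)^lsw_l\otimes\omega\otimes w_1\wedge\cdots\widehat{w_l}\cdots\wedge w_b$. $\mathcal{F}$ is the total complex: $\mathcal{F}_n=\bigoplus_{a+b=n}C_{a,b}$ with differential $\partial^h+\partial^v$. *)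

theory Defs
  imports "HOL-Library.Poly_Mapping"
begin

text \<open>The ring S = k[e_1,...,e_2p] is the subring of polynomials all of whose monomials
  only involve the variables 1..2p.\<close>

type_synonym 'k poly_ring = "(nat \<Rightarrow>\<^sub>0 nat) \<Rightarrow>\<^sub>0 'k"

definition var :: "nat \<Rightarrow> 'k::field poly_ring" where
  "var i = Poly_Mapping.single (Poly_Mapping.single i 1) 1"

definition in_S :: "nat \<Rightarrow> 'k::field poly_ring \<Rightarrow> bool" where
  "in_S p f \<longleftrightarrow> (\<forall>m \<in> Poly_Mapping.keys f. Poly_Mapping.keys m \<subseteq> {1..2*p})"

text \<open>Index sets of the basis vectors e_1..e_{p-1} of V and e_{p+1}..e_{2p-1} of W.\<close>
definition Vidx :: "nat \<Rightarrow> nat set" where "Vidx p = {1..p-1}"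
definition Widx :: "nat \<Rightarrow> nat set" where "Widx p = {p+1..2*p-1}"

definition pos :: "nat set \<Rightarrow> nat \<Rightarrow> nat" where
  "pos A i = card {a \<in> A. a \<le> i}"

text \<open>An element of F_n = (+)_{a+b=n} S (x) /\^(a+2) V (x) /\^b W is a coefficient map
  (A,B) \<mapsto> coefficient in S of the basis vector e_A (x) e_B, where A \<subseteq> Vidx, B \<subseteq> Widx,
  |A| = a+2, |B| = b, and e_A is the wedge of the e_i, i \<in> A, in increasing order.\<close>
definition valid_idx :: "nat \<Rightarrow> nat \<Rightarrow> nat set \<times> nat set \<Rightarrow> bool" where
  "valid_idx p n AB \<longleftrightarrow> fst AB \<subseteq> Vidx p \<and> snd AB \<subseteq> Widx p \<and> 2 \<le> card (fst AB)
      \<and> card (fst AB) + card (snd AB) = n + 2"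

definition chainF :: "nat \<Rightarrow> nat \<Rightarrow> (nat set \<times> nat set \<Rightarrow> 'k::field poly_ring) \<Rightarrow> bool" where
  "chainF p n c \<longleftrightarrow> (\<forall>AB. (valid_idx p n AB \<longrightarrow> in_S p (c AB)) \<and> (\<not> valid_idx p n AB \<longrightarrow> c AB = 0))"

text \<open>Horizontal differential \<partial>^V \<otimes> 1 (zero out of a = 0, i.e. onto |A'| < 2),
  written in coordinates: the coefficient of e_A' (x) e_B' in \<partial>^h c.\<close>
definition dh :: "nat \<Rightarrow> (nat set \<times> nat set \<Rightarrow> 'k::field poly_ring) \<Rightarrow> nat set \<times> nat set \<Rightarrow> 'k poly_ring" where
  "dh p c = (\<lambda>(A', B'). if A' \<subseteq> Vidx p \<and> B' \<subseteq> Widx p \<and> 2 \<le> card A' then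
      (\<Sum>i \<in> Vidx p - A'. (-1) ^ pos (insert i A') i * var i * c (insert i A', B'))
    else 0)"

text \<open>Vertical differential (-1)^a (1 \<otimes> \<partial>^W), a = |A| - 2, in coordinates.\<close>
definition dv :: "nat \<Rightarrow> (nat set \<times> nat set \<Rightarrow> 'k::field poly_ring) \<Rightarrow> nat set \<times> nat set \<Rightarrow> 'k poly_ring" where
  "dv p c = (\<lambda>(A', B'). if A' \<subseteq> Vidx p \<and> B' \<subseteq> Widx p \<and> 2 \<le> card A' then
      (-1) ^ (card A' - 2) *
      (\<Sum>j \<in> Widx p - B'. (-1) ^ pos (insert j B') j * var j * c (A', insert j B'))
    else 0)"

definition dF :: "nat \<Rightarrow> (nat set \<times> nat set \<Rightarrow> 'k::field poly_ring) \<Rightarrow> nat set \<times> nat set \<Rightarrow> 'k poly_ring" where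
  "dF p c = (\<lambda>AB. dh p c AB + dv p c AB)"

end

theory Submission
  imports Defs
begin


abbreviation lk where "lk \<equiv> Poly_Mapping.lookup"

lemma var_mult_lookup:
  "lk (var j * (s::'k::field poly_ring)) m =
     (if lk m j = 0 then 0 else lk s (m - Poly_Mapping.single j 1))"
proof -
  have "lk (var j * s) m = (\<Sum>q. lk s q when m = Poly_Mapping.single j 1 + q)"
    unfolding var_def lookup_mult by (simp add: lookup_single when_mult when_when)
  also have "\<dots> = (if lk m j = 0 then 0 else lk s (m - Poly_Mapping.single j 1))"
  proof (cases "lk m j = 0")
    case True
    have "\<And>q. m \<noteq> Poly_Mapping.single j 1 + q"
      using True by (metis lookup_add lookup_single_eq add_is_0 one_neq_zero)
    then show ?thesis using True by simp
  next
    case False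
    have "\<And>q. (m = Poly_Mapping.single j 1 + q) = (q = m - Poly_Mapping.single j 1)"
      using False by (auto simp: poly_mapping_eq_iff fun_eq_iff lookup_add lookup_minus lookup_single when_def)
    then show ?thesis using False by simp
  qed
  finally show ?thesis .
qed

definition tfree :: "nat set \<Rightarrow> (nat \<Rightarrow>\<^sub>0 nat) \<Rightarrow> bool" where
  "tfree T m \<longleftrightarrow> (\<forall>i\<in>T. lk m i = 0)"

definition R :: "nat set \<Rightarrow> (nat \<Rightarrow>\<^sub>0 nat) \<Rightarrow> 'k::field poly_ring \<Rightarrow> 'k poly_ring" where
  "R T e s = Abs_poly_mapping (\<lambda>m. if tfree T m then lk s (m + e) else 0)"

lemma lookup_R: "lk (R T e s) m = (if tfree T m then lk s (m + e) else 0)"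
proof -
  have "{m. (if tfree T m then lk s (m + e) else 0) \<noteq> 0} \<subseteq> (\<lambda>k. k - e) ` Poly_Mapping.keys s"
  proof
    fix m assume "m \<in> {m. (if tfree T m then lk s (m + e) else 0) \<noteq> 0}"
    then have "m + e \<in> Poly_Mapping.keys s" by (cases "tfree T m") (simp_all add: in_keys_iff)
    moreover have "m = (m + e) - e" by (rule add_diff_cancel_right'[symmetric])
    ultimately show "m \<in> (\<lambda>k. k - e) ` Poly_Mapping.keys s" by (rule rev_image_eqI)
  qed
  then have "finite {m. (if tfree T m then lk s (m + e) else 0) \<noteq> 0}"
    by (rule finite_subset) simp
  then show ?thesis unfolding R_def by simp
qed

lemma R_add: "R T e (a + b) = R T e a + R T e b"
  by (rule poly_mapping_eqI) (simp add: lookup_R lookup_add)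
lemma R_uminus: "R T e (- a) = - R T e a"
  by (rule poly_mapping_eqI) (simp add: lookup_R)
lemma R_zero[simp]: "R T e 0 = 0"
  by (rule poly_mapping_eqI) (simp add: lookup_R)
lemma R_sum: "R T e (sum f A) = (\<Sum>x\<in>A. R T e (f x))"
  by (rule poly_mapping_eqI) (simp add: lookup_R lookup_sum)

lemma sign_mult: "(-1::'a::comm_ring_1) ^ k * s = (if even k then s else - s)"
  by (cases "even k") (simp_all add: neg_one_even_power neg_one_odd_power)

lemma R_sign: "R T e ((-1) ^ k * s) = (-1) ^ k * R T e s"
  by (simp only: sign_mult) (simp add: R_uminus)

lemma R_var_comm:
  assumes "k \<notin> T" "lk e k = 0"
  shows "R T e (var k * s) = var k * R T e s"
proof (rule poly_mapping_eqI)
  fix m :: "nat \<Rightarrow>\<^sub>0 nat"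
  have a: "lk (m + e) k = lk m k" using assms by (simp add: lookup_add)
  show "lk (R T e (var k * s)) m = lk (var k * R T e s) m"
  proof (cases "lk m k = 0")
    case True
    then show ?thesis by (simp add: lookup_R var_mult_lookup a)
  next
    case False
    have b: "m + e - Poly_Mapping.single k 1 = m - Poly_Mapping.single k 1 + e"
      using assms False by (auto simp: poly_mapping_eq_iff fun_eq_iff lookup_add lookup_minus lookup_single when_def)
    have c: "tfree T (m - Poly_Mapping.single k 1) = tfree T m"
      using assms False by (auto simp: tfree_def lookup_minus lookup_single when_def)
    show ?thesis using False by (simp only: lookup_R var_mult_lookup a b c if_False)
  qed
qed

lemma R_var_zero:
  assumes "k \<in> T" "lk e k = 0"
  shows "R T e (var k * s) = 0"
proof (rule poly_mapping_eqI)
  fix m :: "nat \<Rightarrow>\<^sub>0 nat"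
  show "lk (R T e (var k * s)) m = lk 0 m"
  proof (cases "tfree T m")
    case True
    then have "lk (m + e) k = 0" using assms by (simp add: tfree_def lookup_add)
    then show ?thesis using True by (simp add: lookup_R var_mult_lookup)
  next
    case False
    then show ?thesis by (simp add: lookup_R)
  qed
qed

lemma R_var_self:
  assumes "j \<notin> T"
  shows "R T (Poly_Mapping.single j 1) (var j * s) = R T 0 s"
proof (rule poly_mapping_eqI)
  fix m :: "nat \<Rightarrow>\<^sub>0 nat"
  have a: "m + Poly_Mapping.single j 1 - Poly_Mapping.single j 1 = m" by (rule add_diff_cancel_right')
  have b: "lk (m + Poly_Mapping.single j 1) j \<noteq> 0" by (simp add: lookup_add)
  show "lk (R T (Poly_Mapping.single j 1) (var j * s)) m = lk (R T 0 s) m"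
    unfolding lookup_R var_mult_lookup a using b by simp
qed

lemma var_R_self_lookup:
  assumes "j \<notin> T"
  shows "lk (var j * R T (Poly_Mapping.single j 1) s) (m::nat \<Rightarrow>\<^sub>0 nat) =
    (if lk m j \<noteq> 0 \<and> tfree T m then lk s m else 0)"
proof (cases "lk m j = 0")
  case True
  then show ?thesis by (simp add: lookup_R var_mult_lookup)
next
  case False
  have b: "m - Poly_Mapping.single j 1 + Poly_Mapping.single j 1 = m"
    using False by (auto simp: poly_mapping_eq_iff fun_eq_iff lookup_add lookup_minus lookup_single when_def)
  have c: "tfree T (m - Poly_Mapping.single j 1) = tfree T m"
    using assms False by (auto simp: tfree_def lookup_minus lookup_single when_def)
  show ?thesis using False by (simp only: lookup_R var_mult_lookup b c if_False) simp
qed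

lemma counting:
  assumes "finite (J::nat set)"
  shows "(\<Sum>j\<in>J. (if lk (m::nat \<Rightarrow>\<^sub>0 nat) j \<noteq> 0 \<and> tfree {i\<in>J. i < j} m then x else 0))
     + (if tfree J m then x else 0) = (x::'a::comm_monoid_add)"
proof (cases "tfree J m")
  case True
  then have "\<And>j. j \<in> J \<Longrightarrow> lk m j = 0" by (simp add: tfree_def)
  then show ?thesis using True by simp
next
  case False
  define j0 where "j0 = Min {i\<in>J. lk m i \<noteq> 0}"
  have ne: "{i\<in>J. lk m i \<noteq> 0} \<noteq> {}" using False by (auto simp: tfree_def)
  have fin: "finite {i\<in>J. lk m i \<noteq> 0}" using assms by simp
  have j0: "j0 \<in> J" "lk m j0 \<noteq> 0" using Min_in[OF fin ne] unfolding j0_def by auto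
  have j0min: "\<And>i. i \<in> J \<Longrightarrow> lk m i \<noteq> 0 \<Longrightarrow> j0 \<le> i" unfolding j0_def using fin by auto
  have "\<And>j. j \<in> J \<Longrightarrow> (lk m j \<noteq> 0 \<and> tfree {i\<in>J. i < j} m) = (j = j0)"
    unfolding tfree_def using j0 j0min by (metis (mono_tags, lifting) leD mem_Collect_eq nat_neq_iff)
  then have "(\<Sum>j\<in>J. (if lk m j \<noteq> 0 \<and> tfree {i\<in>J. i < j} m then x else 0))
     = (\<Sum>j\<in>J. (if j = j0 then x else 0))" by (intro sum.cong) auto
  also have "\<dots> = x" using j0 assms by simp
  finally show ?thesis using False by simp
qed



definition kd :: "nat set \<Rightarrow> (nat set \<Rightarrow> 'k::field poly_ring) \<Rightarrow> nat set \<Rightarrow> 'k poly_ring" where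
  "kd I g B = (if B \<subseteq> I then (\<Sum>j\<in>I - B. (-1) ^ pos (insert j B) j * var j * g (insert j B)) else 0)"

definition Qo :: "nat set \<Rightarrow> nat \<Rightarrow> 'k::field poly_ring \<Rightarrow> 'k poly_ring" where
  "Qo I j s = R {i\<in>I. i < j} (Poly_Mapping.single j 1) s"

definition kh :: "nat set \<Rightarrow> (nat set \<Rightarrow> 'k::field poly_ring) \<Rightarrow> nat set \<Rightarrow> 'k poly_ring" where
  "kh I g B = (if B \<subseteq> I \<and> B \<noteq> {} then - Qo I (Min B) (g (B - {Min B})) else 0)"

definition kp :: "nat set \<Rightarrow> (nat set \<Rightarrow> 'k::field poly_ring) \<Rightarrow> nat set \<Rightarrow> 'k poly_ring" where
  "kp I g B = (if B = {} then R I 0 (g {}) else 0)"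

lemma kd_cong: "(\<And>j. j \<in> I - B \<Longrightarrow> g (insert j B) = g' (insert j B)) \<Longrightarrow> kd I g B = kd I g' B"
  unfolding kd_def by (auto intro!: sum.cong)

lemma kd_add: "kd I (\<lambda>B. f B + g B) B = kd I f B + kd I g B"
  unfolding kd_def by (simp add: sum.distrib distrib_left)

lemma kd_sign: "kd I (\<lambda>B. (-1) ^ k * g B) B = (-1) ^ k * kd I g B"
  unfolding kd_def by (simp add: sum_distrib_left ac_simps)

lemma kd_uminus: "kd I (\<lambda>B. - g B) B = - kd I g B"
  unfolding kd_def by (simp add: sum_negf)

lemma kd_zero: "kd I (\<lambda>_. 0) B = 0"
  unfolding kd_def by simp

lemma R_signvar: assumes "k \<notin> T" "lk e k = 0" shows
   "R T e ((-1) ^ a * var k * s) = (-1) ^ a * var k * R T e s"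
  by (simp only: mult.assoc R_sign R_var_comm[OF assms])

lemma R_signvar_zero: assumes "k \<in> T" "lk e k = 0" shows "R T e ((-1) ^ a * var k * s) = 0"
  by (simp only: mult.assoc R_sign R_var_zero[OF assms] mult_zero_right)

lemma R_kd:
  assumes "\<And>i. i \<in> J \<Longrightarrow> i \<notin> T \<and> lk e i = 0"
  shows "R T e (kd J g A) = kd J (\<lambda>A. R T e (g A)) A"
  unfolding kd_def using assms by (auto simp: R_sum R_signvar intro!: sum.cong)

lemma R_kd_zero:
  assumes "\<And>i. i \<in> J \<Longrightarrow> i \<in> T \<and> lk e i = 0"
  shows "R T e (kd J g A) = 0"
  unfolding kd_def using assms by (auto simp: R_sum R_signvar_zero intro!: sum.neutral)

lemma kh_cong: assumes "(\<And>B. B \<subseteq> I \<Longrightarrow> g B = g' B)" shows "kh I g B = kh I g' B"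
proof -
  have "B \<subseteq> I \<Longrightarrow> g (B - {Min B}) = g' (B - {Min B})" using assms by blast
  then show ?thesis by (simp add: kh_def)
qed

lemma kh_sign: "kh I (\<lambda>B. (-1) ^ k * g B) B = (-1) ^ k * kh I g B"
  unfolding kh_def Qo_def by (simp add: R_sign)

lemma kh_kd_comm:
  assumes "\<And>i. i \<in> J \<Longrightarrow> i \<notin> I" "finite I"
  shows "kh I (\<lambda>B. kd J (\<lambda>A. c A B) A') B' = kd J (\<lambda>A. kh I (\<lambda>B. c A B) B') A'"
proof (cases "B' \<subseteq> I \<and> B' \<noteq> {}")
  case True
  then have mu: "Min B' \<in> I" using assms(2) by (meson Min_in finite_subset subsetD)
  have "kh I (\<lambda>B. kd J (\<lambda>A. c A B) A') B' = - Qo I (Min B') (kd J (\<lambda>A. c A (B' - {Min B'})) A')"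
    using True by (simp add: kh_def)
  also have "\<dots> = - kd J (\<lambda>A. Qo I (Min B') (c A (B' - {Min B'}))) A'"
    unfolding Qo_def using assms(1) mu
    by (subst R_kd) (auto simp: lookup_single when_def)
  also have "\<dots> = kd J (\<lambda>A. kh I (\<lambda>B. c A B) B') A'"
    using True by (simp add: kh_def kd_uminus)
  finally show ?thesis .
next
  case False
  then have "(\<lambda>A. kh I (\<lambda>B. c A B) B') = (\<lambda>_. 0)" by (simp only: kh_def if_not_P[OF False] if_False)
  then have eq: "(\<lambda>A. kh I (\<lambda>B. c A B) B') = (\<lambda>_. 0)" .
  have lhs: "kh I (\<lambda>B. kd J (\<lambda>A. c A B) A') B' = 0"
    by (simp only: kh_def if_not_P[OF False] if_False)
  show ?thesis by (simp only: lhs eq kd_zero)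
qed



lemma pos_insert_min:
  assumes "finite B" "j \<notin> B" "\<And>b. b \<in> B \<Longrightarrow> j < b"
  shows "pos (insert j B) j = 1"
proof -
  have "{a \<in> insert j B. a \<le> j} = {j}" using assms by force
  then show ?thesis by (simp add: pos_def)
qed

lemma pos_shift:
  assumes "finite B0" "mu \<notin> B0" "mu < j"
  shows "pos (insert j (insert mu B0)) j = Suc (pos (insert j B0) j)"
proof -
  have "{a \<in> insert j (insert mu B0). a \<le> j} = insert mu {a \<in> insert j B0. a \<le> j}"
    using assms by auto
  moreover have "mu \<notin> {a \<in> insert j B0. a \<le> j}" using assms by auto
  moreover have "finite {a \<in> insert j B0. a \<le> j}" using assms by simp
  ultimately show ?thesis by (simp add: pos_def)
qed

lemma koszul_homotopy_empty:
  assumes "finite I"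
  shows "kd I (kh I g) {} + kh I (kd I g) {} = g {} - kp I g {}"
proof -
  have p1: "pos {j} j = 1" for j
    using pos_insert_min[of "{}" j] by simp
  have s1: "kd I (kh I g) {} = (\<Sum>j\<in>I. var j * Qo I j (g {}))"
    unfolding kd_def by (auto intro!: sum.cong simp: kh_def p1)
  have s2: "kh I (kd I g) {} = 0" by (simp add: kh_def)
  have s3: "(\<Sum>j\<in>I. var j * Qo I j s) = s - R I 0 s" for s :: "'a::field poly_ring"
  proof (rule poly_mapping_eqI)
    fix m :: "nat \<Rightarrow>\<^sub>0 nat"
    have "lk (\<Sum>j\<in>I. var j * Qo I j s) m
        = (\<Sum>j\<in>I. if lk m j \<noteq> 0 \<and> tfree {i\<in>I. i<j} m then lk s m else 0)"
      unfolding lookup_sum Qo_def by (intro sum.cong refl var_R_self_lookup) simp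
    then show "lk (\<Sum>j\<in>I. var j * Qo I j s) m = lk (s - R I 0 s) m"
      using counting[OF assms(1), of m "lk s m"] by (cases "tfree I m") (auto simp: lookup_minus lookup_R)
  qed
  show ?thesis by (simp add: s1 s2 s3 kp_def)
qed

lemma koszul_homotopy_ne:
  assumes "finite I" "B \<subseteq> I" "B \<noteq> {}"
  shows "kd I (kh I g) B + kh I (kd I g) B = g B - kp I g B"
proof -
  define mu where "mu = Min B"
  define B0 where "B0 = B - {mu}"
  define T where "T = {i\<in>I. i < mu}"
  define e where "e = (Poly_Mapping.single mu 1 :: nat \<Rightarrow>\<^sub>0 nat)"
  have finB: "finite B" using assms finite_subset by blast
  have mu: "mu \<in> B" unfolding mu_def using Min_in finB assms(3) by blast
  have mule: "\<And>b. b \<in> B \<Longrightarrow> mu \<le> b" unfolding mu_def using finB by simp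
  have mumin: "\<And>b. b \<in> B0 \<Longrightarrow> mu < b" unfolding B0_def using mule
    by (metis DiffE insertI1 le_neq_implies_less)
  have Beq: "B = insert mu B0" unfolding B0_def using mu by blast
  have muB0: "mu \<notin> B0" unfolding B0_def by blast
  have finB0: "finite B0" unfolding B0_def using finB by simp
  have B0I: "B0 \<subseteq> I" unfolding B0_def using assms by blast
  have muI: "mu \<in> I" using mu assms by blast
  have muT: "mu \<notin> T" unfolding T_def by simp
  have finT: "finite T" unfolding T_def using assms by simp
  let ?X = "\<lambda>j. (-1) ^ pos (insert j B0) j * var j * Qo I mu (g (insert j B0))"
  have t1: "(-1) ^ pos (insert j B) j * var j * kh I g (insert j B) =
     (if j < mu then var j * Qo I j (g B) else ?X j)" if j: "j \<in> I - B" for j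
  proof (cases "j < mu")
    case True
    have jB: "\<And>b. b \<in> B \<Longrightarrow> j < b" using True mule by fastforce
    have "Min (insert j B) = j" using jB finB by (simp add: Min_insert assms(3))
    moreover have "insert j B - {j} = B" using j by blast
    moreover have "pos (insert j B) j = 1" using pos_insert_min[OF finB] j jB by blast
    ultimately show ?thesis using True j assms(2) by (simp add: kh_def)
  next
    case False
    then have lt: "mu < j" using j mu by (metis DiffD2 linorder_neqE_nat)
    have "Min (insert j B) = mu" using lt finB assms(3) unfolding mu_def by (simp add: Min_insert)
    moreover have "insert j B - {mu} = insert j B0" using lt unfolding B0_def by blast
    moreover have "pos (insert j B) j = Suc (pos (insert j B0) j)"
      unfolding Beq using pos_shift[OF finB0 muB0 lt] .
    ultimately show ?thesis using False j assms(2) by (simp add: kh_def)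
  qed
  have s1: "kd I (kh I g) B = (\<Sum>j\<in>I - B. if j < mu then var j * Qo I j (g B) else ?X j)"
    unfolding kd_def using assms(2) by (simp only: if_True) (rule sum.cong[OF refl t1])
  have ID: "I - B0 = insert mu (I - B)" using Beq muI muB0 by blast
  have pmu: "pos B mu = 1" unfolding Beq using pos_insert_min[OF finB0 muB0] mumin by blast
  have t2: "Qo I mu ((-1) ^ pos (insert k B0) k * var k * g (insert k B0)) = (if k < mu then 0 else ?X k)"
    if k: "k \<in> I - B" for k
  proof (cases "k < mu")
    case True
    then show ?thesis unfolding Qo_def using k
      by (simp add: R_signvar_zero T_def lookup_single when_def)
  next
    case False
    have "k \<noteq> mu" using k mu by blast
    then show ?thesis unfolding Qo_def using False
      by (subst R_signvar) (auto simp: lookup_single when_def)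
  qed
  have s2: "kh I (kd I g) B = R T 0 (g B) - (\<Sum>j\<in>I - B. if j < mu then 0 else ?X j)"
  proof -
    have "kh I (kd I g) B = - Qo I mu (kd I g B0)"
      using assms(2,3) by (simp add: kh_def mu_def B0_def)
    also have "kd I g B0 = (-1) ^ pos B mu * var mu * g B +
        (\<Sum>k\<in>I - B. (-1) ^ pos (insert k B0) k * var k * g (insert k B0))"
    proof -
      have "kd I g B0 = (\<Sum>k\<in>insert mu (I - B). (-1) ^ pos (insert k B0) k * var k * g (insert k B0))"
        unfolding kd_def ID using B0I by simp
      also have "\<dots> = (-1) ^ pos (insert mu B0) mu * var mu * g (insert mu B0) +
        (\<Sum>k\<in>I - B. (-1) ^ pos (insert k B0) k * var k * g (insert k B0))"
        by (rule sum.insert) (use assms(1) mu in auto)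
      finally show ?thesis unfolding Beq[symmetric] .
    qed
    also have "- Qo I mu \<dots> = R T 0 (g B) - (\<Sum>j\<in>I - B. if j < mu then 0 else ?X j)"
      unfolding pmu Qo_def R_add R_sum
      using t2[unfolded Qo_def] R_var_self[OF muT[unfolded T_def]] by (simp add: R_uminus T_def)
    finally show ?thesis .
  qed
  have s3: "(\<Sum>j\<in>I - B. if j < mu then var j * Qo I j s else 0) + R T 0 s = s" for s
  proof -
    have "{j \<in> I - B. j < mu} = T" unfolding T_def using mule by fastforce
    then have "(\<Sum>j\<in>I - B. if j < mu then var j * Qo I j s else 0) = (\<Sum>j\<in>T. var j * Qo I j s)"
      using sum.inter_filter[of "I - B" "\<lambda>j. var j * Qo I j s" "\<lambda>j. j < mu"] assms(1) by simp
    also have "\<dots> = (\<Sum>j\<in>T. var j * R {i\<in>T. i < j} (Poly_Mapping.single j 1) s)"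
    proof (rule sum.cong)
      fix j assume "j \<in> T"
      then have "{i\<in>I. i < j} = {i\<in>T. i < j}" unfolding T_def by auto
      then show "var j * Qo I j s = var j * R {i\<in>T. i < j} (Poly_Mapping.single j 1) s"
        by (simp add: Qo_def)
    qed simp
    finally have eq: "(\<Sum>j\<in>I - B. if j < mu then var j * Qo I j s else 0) =
        (\<Sum>j\<in>T. var j * R {i\<in>T. i < j} (Poly_Mapping.single j 1) s)" .
    show ?thesis
    proof (rule poly_mapping_eqI)
      fix m :: "nat \<Rightarrow>\<^sub>0 nat"
      have "lk (\<Sum>j\<in>T. var j * R {i\<in>T. i < j} (Poly_Mapping.single j 1) s) m
        = (\<Sum>j\<in>T. if lk m j \<noteq> 0 \<and> tfree {i\<in>T. i<j} m then lk s m else 0)"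
        unfolding lookup_sum by (intro sum.cong refl var_R_self_lookup) simp
      then show "lk ((\<Sum>j\<in>I - B. if j < mu then var j * Qo I j s else 0) + R T 0 s) m = lk s m"
        unfolding eq lookup_add using counting[OF finT, of m "lk s m"] by (cases "tfree T m") (auto simp: lookup_R)
    qed
  qed
  have comb: "(\<Sum>j\<in>I - B. if j < mu then var j * Qo I j (g B) else ?X j)
     = (\<Sum>j\<in>I - B. if j < mu then var j * Qo I j (g B) else 0) + (\<Sum>j\<in>I - B. if j < mu then 0 else ?X j)"
    by (simp add: sum.distrib[symmetric] if_distrib cong: sum.cong) (intro sum.cong; simp)
  have "kd I (kh I g) B + kh I (kd I g) B = (\<Sum>j\<in>I - B. if j < mu then var j * Qo I j (g B) else 0) + R T 0 (g B)"
    unfolding s1 s2 comb by simp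
  also have "\<dots> = g B" by (rule s3)
  finally show ?thesis using assms(3) by (simp add: kp_def)
qed

lemma koszul_homotopy:
  assumes "finite I" "B \<subseteq> I"
  shows "kd I (kh I g) B + kh I (kd I g) B = g B - kp I g B"
  using koszul_homotopy_empty[OF assms(1)] koszul_homotopy_ne[OF assms] by (cases "B = {}") auto



lemma in_S_zero: "in_S p 0" by (simp add: in_S_def)

lemma in_S_add: "in_S p a \<Longrightarrow> in_S p b \<Longrightarrow> in_S p (a + b)"
  unfolding in_S_def by (metis (no_types, lifting) Un_iff keys_add subsetD)

lemma in_S_uminus: "in_S p a \<Longrightarrow> in_S p (- a)"
  unfolding in_S_def by simp

lemma in_S_sign: "in_S p a \<Longrightarrow> in_S p ((-1) ^ k * a)"
  by (simp add: sign_mult in_S_uminus)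

lemma in_S_R: assumes "in_S p s" shows "in_S p (R T e s)"
  unfolding in_S_def
proof
  fix m assume "m \<in> Poly_Mapping.keys (R T e s)"
  then have "m + e \<in> Poly_Mapping.keys s"
    by (cases "tfree T m") (simp_all add: in_keys_iff lookup_R)
  then have "Poly_Mapping.keys (m + e) \<subseteq> {1..2*p}" using assms by (simp add: in_S_def)
  moreover have "Poly_Mapping.keys m \<subseteq> Poly_Mapping.keys (m + e)"
    by (auto simp: in_keys_iff lookup_add)
  ultimately show "Poly_Mapping.keys m \<subseteq> {1..2*p}" by blast
qed

lemma in_S_kh: assumes "\<And>B. in_S p (g B)" shows "in_S p (kh I g B)"
  unfolding kh_def Qo_def using assms by (simp add: in_S_uminus in_S_R in_S_zero)

lemma dF_eq:
  "dF p c (A', B') = (if A' \<subseteq> Vidx p \<and> B' \<subseteq> Widx p \<and> 2 \<le> card A' then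
     kd (Vidx p) (\<lambda>A. c (A, B')) A' + (-1) ^ (card A' - 2) * kd (Widx p) (\<lambda>B. c (A', B)) B' else 0)"
  unfolding dF_def dh_def dv_def kd_def by simp

lemma XY_disj: "i \<in> Vidx p \<Longrightarrow> i \<notin> Widx p"
  unfolding Vidx_def Widx_def by auto

lemma finX: "finite (Vidx p)" unfolding Vidx_def by simp
lemma finY: "finite (Widx p)" unfolding Widx_def by simp



lemma main:
  fixes c :: "nat set \<times> nat set \<Rightarrow> 'k::field poly_ring"
  assumes n: "n \<noteq> 0" and ch: "chainF p n c" and cyc: "dF p c = (\<lambda>_. 0)"
  shows "\<exists>d. chainF p (Suc n) d \<and> dF p d = c"
proof -
  define X where "X = Vidx p"
  define Y where "Y = Widx p"
  have finX: "finite X" and finY: "finite Y" unfolding X_def Y_def by (simp_all add: finX finY)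
  have XY: "\<And>i. i \<in> X \<Longrightarrow> i \<notin> Y" unfolding X_def Y_def by (rule XY_disj)
  have c0: "\<And>AB. \<not> valid_idx p n AB \<Longrightarrow> c AB = 0" using ch unfolding chainF_def by blast
  have cS: "in_S p (c AB)" for AB
  proof (cases AB)
    case (Pair a b)
    then show ?thesis using ch c0[of AB] in_S_zero[of p] unfolding chainF_def
      by (cases "valid_idx p n (a, b)") auto
  qed
  have cycle: "kd X (\<lambda>A. c (A, B)) A' = (-1) ^ Suc (card A' - 2) * kd Y (\<lambda>B. c (A', B)) B"
    if "A' \<subseteq> X" "B \<subseteq> Y" "2 \<le> card A'" for A' B
  proof -
    have "dF p c (A', B) = 0" using cyc by simp
    then have "kd X (\<lambda>A. c (A, B)) A' + (-1) ^ (card A' - 2) * kd Y (\<lambda>B. c (A', B)) B = 0"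
      using that unfolding dF_eq X_def Y_def by simp
    then show ?thesis by (simp add: eq_neg_iff_add_eq_0)
  qed
  define P where "P = (\<lambda>A. R Y 0 (c (A, {})))"
  define H2 where "H2 = (\<lambda>A B. if A \<subseteq> X \<and> 2 \<le> card A then (-1) ^ (card A - 2) * kh Y (\<lambda>B. c (A, B)) B else 0)"
  define E2 where "E2 = (\<lambda>A (B::nat set). if B = {} then kh X P A else 0)"
  define d where "d = (\<lambda>AB. H2 (fst AB) (snd AB) + E2 (fst AB) (snd AB))"
  have kdP: "kd X P A'' = 0" for A''
  proof (cases "A'' \<subseteq> X \<and> 2 \<le> card A''")
    case True
    have "R Y 0 (kd X (\<lambda>A. c (A, {})) A'') = R Y 0 ((-1) ^ Suc (card A'' - 2) * kd Y (\<lambda>B. c (A'', B)) {})"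
      using cycle[of A'' "{}"] True by simp
    also have "\<dots> = 0" unfolding R_sign by (subst R_kd_zero) (simp_all)
    finally show ?thesis unfolding P_def using XY by (subst (asm) R_kd) simp_all
  next
    case False
    show ?thesis
    proof (cases "A'' \<subseteq> X")
      case True
      then have cA: "card A'' < 2" using False by simp
      have "P (insert i A'') = 0" if "i \<in> X - A''" for i
      proof -
        have "finite A''" using True finX finite_subset by blast
        then have "card (insert i A'') \<le> 2" using cA by (simp add: card_insert_if)
        then have "\<not> valid_idx p n (insert i A'', {})" using n by (simp add: valid_idx_def)
        then show ?thesis unfolding P_def using c0 by simp
      qed
      then have "kd X P A'' = kd X (\<lambda>_. 0) A''" by (intro kd_cong) simp
      then show ?thesis by (simp add: kd_zero)
    next
      case False
      then show ?thesis by (simp add: kd_def)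
    qed
  qed
  have sq: "(-1::'k poly_ring) ^ a * (-1) ^ a = 1" for a
    by (simp add: power_add[symmetric])
  have dval: "dF p d (A', B') = c (A', B')" for A' B'
  proof (cases "A' \<subseteq> X \<and> B' \<subseteq> Y \<and> 2 \<le> card A'")
    case False
    then have "\<not> valid_idx p n (A', B')" unfolding valid_idx_def X_def Y_def by auto
    then have "c (A', B') = 0" by (rule c0)
    moreover have "dF p d (A', B') = 0" unfolding dF_eq
      by (rule if_not_P) (use False in \<open>simp add: X_def Y_def\<close>)
    ultimately show ?thesis by simp
  next
    case True
    define k where "k = card A' - 2"
    define g where "g = (\<lambda>B. c (A', B))"
    have finA': "finite A'" using True finX finite_subset by blast
    have "dF p d (A', B') = kd X (\<lambda>A. d (A, B')) A' + (-1) ^ k * kd Y (\<lambda>B. d (A', B)) B'"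
      using True unfolding dF_eq X_def Y_def k_def by simp
    also have "kd X (\<lambda>A. d (A, B')) A' = kd X (\<lambda>A. H2 A B') A' + kd X (\<lambda>A. E2 A B') A'"
      unfolding d_def by (simp add: kd_add)
    also have "kd Y (\<lambda>B. d (A', B)) B' = kd Y (\<lambda>B. H2 A' B) B' + kd Y (\<lambda>B. E2 A' B) B'"
      unfolding d_def by (simp add: kd_add)
    also have "kd X (\<lambda>A. H2 A B') A' = kh Y (kd Y g) B'"
    proof -
      have "kd X (\<lambda>A. H2 A B') A' = kd X (\<lambda>A. (-1) ^ Suc k * kh Y (\<lambda>B. c (A, B)) B') A'"
      proof (rule kd_cong)
        fix j assume j: "j \<in> X - A'"
        then have "card (insert j A') = Suc (card A')" using finA' by simp
        then show "H2 (insert j A') B' = (-1) ^ Suc k * kh Y (\<lambda>B. c (insert j A', B)) B'"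
        proof -
          have e1: "card (insert j A') - 2 = Suc k" using \<open>card (insert j A') = Suc (card A')\<close> True
            unfolding k_def by linarith
          have "H2 (insert j A') B' = (-1) ^ (card (insert j A') - 2) * kh Y (\<lambda>B. c (insert j A', B)) B'"
            unfolding H2_def using True j \<open>card (insert j A') = Suc (card A')\<close> by simp
          then show ?thesis unfolding e1 .
        qed
      qed
      also have "\<dots> = (-1) ^ Suc k * kd X (\<lambda>A. kh Y (\<lambda>B. c (A, B)) B') A'"
        by (rule kd_sign)
      also have "kd X (\<lambda>A. kh Y (\<lambda>B. c (A, B)) B') A' = kh Y (\<lambda>B. kd X (\<lambda>A. c (A, B)) A') B'"
        by (rule kh_kd_comm[OF XY finY, symmetric])
      also have "\<dots> = kh Y (\<lambda>B. (-1) ^ Suc k * kd Y g B) B'"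
        by (rule kh_cong) (use True cycle in \<open>simp add: g_def k_def\<close>)
      also have "\<dots> = (-1) ^ Suc k * kh Y (kd Y g) B'" by (rule kh_sign)
      finally show ?thesis by (simp add: mult.assoc[symmetric] sq)
    qed
    also have "kd Y (\<lambda>B. H2 A' B) B' = (-1) ^ k * kd Y (kh Y g) B'"
    proof -
      have "(\<lambda>B. H2 A' B) = (\<lambda>B. (-1) ^ k * kh Y g B)"
        using True unfolding H2_def g_def k_def by simp
      then show ?thesis by (simp add: kd_sign)
    qed
    also have "kd Y (\<lambda>B. E2 A' B) B' = 0"
    proof -
      have "kd Y (\<lambda>B. E2 A' B) B' = kd Y (\<lambda>_. 0) B'" by (rule kd_cong) (simp add: E2_def)
      then show ?thesis by (simp add: kd_zero)
    qed
    also have "kd X (\<lambda>A. E2 A B') A' = (if B' = {} then P A' else 0)"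
    proof (cases "B' = {}")
      case True
      have "kh X (kd X P) A' = kh X (\<lambda>_. 0) A'" by (rule kh_cong) (simp add: kdP)
      also have "\<dots> = 0" by (simp add: kh_def Qo_def)
      finally have z: "kh X (kd X P) A' = 0" .
      have ne: "A' \<noteq> {}" using \<open>A' \<subseteq> X \<and> B' \<subseteq> Y \<and> 2 \<le> card A'\<close> by auto
      have "(\<lambda>A. E2 A B') = kh X P" using True unfolding E2_def by simp
      then show ?thesis using koszul_homotopy[OF finX, of A' P] True ne z \<open>A' \<subseteq> X \<and> B' \<subseteq> Y \<and> 2 \<le> card A'\<close>
        by (simp add: kp_def)
    next
      case False
      then have "(\<lambda>A. E2 A B') = (\<lambda>_. 0)" unfolding E2_def by simp
      then show ?thesis using False by (simp add: kd_zero)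
    qed
    finally have "dF p d (A', B') = kh Y (kd Y g) B' + (if B' = {} then P A' else 0) + (-1) ^ k * ((-1) ^ k * kd Y (kh Y g) B' + 0)" .
    also have "\<dots> = kd Y (kh Y g) B' + kh Y (kd Y g) B' + (if B' = {} then P A' else 0)"
      by (simp add: mult.assoc[symmetric] sq)
    also have "\<dots> = c (A', B')"
      using koszul_homotopy[OF finY, of B' g] True by (simp add: kp_def g_def P_def)
    finally show ?thesis .
  qed
  have dS: "in_S p (d AB)" for AB
    unfolding d_def H2_def E2_def P_def
    by (auto intro!: in_S_add in_S_sign in_S_kh in_S_R cS simp: in_S_zero)
  have d0: "d (A, B) = 0" if nv: "\<not> valid_idx p (Suc n) (A, B)" for A B
  proof -
    have h: "H2 A B = 0"
    proof (cases "A \<subseteq> X \<and> 2 \<le> card A \<and> B \<subseteq> Y \<and> B \<noteq> {}")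
      case True
      have finB: "finite B" using True finY finite_subset by blast
      have "Min B \<in> B" using True finB by simp
      then have cB: "card (B - {Min B}) = card B - 1" using finB by simp
      have "card B \<ge> 1" using True finB by (simp add: Suc_leI card_gt_0_iff)
      then have "\<not> valid_idx p n (A, B - {Min B})"
        using nv True cB unfolding valid_idx_def X_def Y_def by auto
      then have "c (A, B - {Min B}) = 0" by (rule c0)
      then show ?thesis unfolding H2_def kh_def Qo_def by simp
    next
      case False
      then show ?thesis unfolding H2_def kh_def by auto
    qed
    have e: "E2 A B = 0"
    proof (cases "B = {} \<and> A \<subseteq> X \<and> A \<noteq> {}")
      case True
      have finA: "finite A" using True finX finite_subset by blast
      have "Min A \<in> A" using True finA by simp
      then have cA: "card (A - {Min A}) = card A - 1" using finA by simp
      have "card A \<ge> 1" using True finA by (simp add: Suc_leI card_gt_0_iff)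
      then have "\<not> valid_idx p n (A - {Min A}, {})"
        using nv True cA unfolding valid_idx_def X_def Y_def by auto
      then have "c (A - {Min A}, {}) = 0" by (rule c0)
      then show ?thesis unfolding E2_def kh_def Qo_def P_def using True by simp
    next
      case False
      then show ?thesis unfolding E2_def kh_def by auto
    qed
    show ?thesis unfolding d_def using h e by simp
  qed
  have "chainF p (Suc n) d" unfolding chainF_def using dS d0 by auto
  moreover have "dF p d = c" using dval by auto
  ultimately show ?thesis by blast
qed


theorem proposition7p6:
  fixes p n :: nat
  assumes "p \<ge> 3" and "n \<noteq> 0"
  shows "\<forall>c :: nat set \<times> nat set \<Rightarrow> 'k::field poly_ring.
           chainF p n c \<and> dF p c = (\<lambda>_. 0) \<longrightarrow>
           (\<exists>d. chainF p (Suc n) d \<and> dF p d = c)"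
  using main[OF assms(2)] by blast

end
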